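(* Let $(X,\mathcal{A})$ be a measurable space, $f_1,f_2\in\mathcal{F}^{(X,\mathcal{A})}$ comonotone, and $\star:[0,\infty)^2\to[0,\infty)$ continuous, non-decreasing in both arguments and bounded from above by the minimum ($a\star b\le\min(a,b)$). Let $\omega_j,\xi_j\in(0,\infty)$, $j=0,1,2$, be such that $x^{1/(\xi_0\omega_0)}\le x\le x^{1/(\xi_i\omega_i)}$ and $x\ge x^{\omega_i/\omega_0}$ for all $x\in[0,\infty)$ and $i=1,2$, and let $m\in\mathcal{M}^{(X,\mathcal{A})}$ be a monotone measure with $\mathbf{Su}(m,f_i^{\xi_i})<\infty$, $i=1,2$. Then \[ \big[\mathbf{Su}\big(m,(f_1\star f_2)^{\xi_0}\big)\big]^{\omega_0}\ \ge\ \big[\mathbf{Su}(m,f_1^{\xi_1})\big]^{\omega_1}\star\big[\mathbf{Su}(m,f_2^{\xi_2})\big]^{\omega_2}. \]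
   Context: A monotone measure on $(X,\mathcal{A})$ is $m:\mathcal{A}\to[0,\infty]$ with $m(\emptyset)=0$, $m(X)>0$, $m(A)\le m(B)$ for $A\subseteq B$; $\mathcal{M}^{(X,\mathcal{A})}$ is the set of these; $\mathcal{F}^{(X,\mathcal{A})}$ the set of $\mathcal{A}$-measurable $f:X\to[0,\infty]$. $\mathbf{Su}(m,f)=\sup\{\min(t,m(\{f\ge t\})) : t\in(0,\infty]\}$. $f_1,f_2$ are comonotone if $(f_1(x)-f_1(y))(f_2(x)-f_2(y))\ge0$ for all $x,y$. Operations on functions are pointwise. *)

theory Defs
  imports "HOL-Analysis.Analysis"
begin

definition monotone_measure :: "'a measure \<Rightarrow> ('a set \<Rightarrow> ennreal) \<Rightarrow> bool" where
  "monotone_measure M m \<longleftrightarrow>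
     m {} = 0 \<and> m (space M) > 0 \<and>
     (\<forall>A\<in>sets M. \<forall>B\<in>sets M. A \<subseteq> B \<longrightarrow> m A \<le> m B)"

definition sugeno :: "'a measure \<Rightarrow> ('a set \<Rightarrow> ennreal) \<Rightarrow> ('a \<Rightarrow> ennreal) \<Rightarrow> ennreal" where
  "sugeno M m f = (SUP t\<in>{0<..}. min t (m {x\<in>space M. t \<le> f x}))"

text \<open>Comonotonicity: (f1 x - f1 y)(f2 x - f2 y) \<ge> 0, i.e. never strictly opposite.\<close>
definition comonotone :: "'a measure \<Rightarrow> ('a \<Rightarrow> ennreal) \<Rightarrow> ('a \<Rightarrow> ennreal) \<Rightarrow> bool" where
  "comonotone M f1 f2 \<longleftrightarrow>
     (\<forall>x\<in>space M. \<forall>y\<in>space M. \<not> (f1 x < f1 y \<and> f2 y < f2 x))"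

text \<open>Power x^r on [0,\<infinity>] for r > 0, with \<infinity>^r = \<infinity>.\<close>
definition enn_powr :: "ennreal \<Rightarrow> real \<Rightarrow> ennreal" where
  "enn_powr x r = (if x = \<infinity> then \<infinity> else ennreal (enn2real x powr r))"

text \<open>Extension of an operation on [0,\<infinity>) to [0,\<infinity>] (by monotone supremum);
  agrees with the operation on finite arguments when it is non-decreasing.\<close>
definition star_ext :: "(real \<Rightarrow> real \<Rightarrow> real) \<Rightarrow> ennreal \<Rightarrow> ennreal \<Rightarrow> ennreal" where
  "star_ext s a b = (SUP p\<in>{(x, y). 0 \<le> x \<and> 0 \<le> y \<and> ennreal x \<le> a \<and> ennreal y \<le> b}.
                        ennreal (s (fst p) (snd p)))"

end

theory Submission imports Defs begin

lemma enn_powr_meas[measurable]: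
  "f \<in> borel_measurable M \<Longrightarrow> (\<lambda>x. enn_powr (f x) r) \<in> borel_measurable M"
proof -
  assume [measurable]: "f \<in> borel_measurable M"
  have [measurable]: "{x \<in> space M. f x = \<infinity>} \<in> sets M" by measurable
  have [measurable]: "(\<lambda>x. enn2real (f x) powr r) \<in> borel_measurable M"
    by (intro powr_real_measurable) auto
  show ?thesis unfolding enn_powr_def by measurable
qed

lemma enn_powr_mono:
  assumes "x \<le> y" "r > 0" shows "enn_powr x r \<le> enn_powr y r"
proof (cases "y = \<infinity>")
  case True then show ?thesis by (simp add: enn_powr_def)
next
  case False
  then have "x \<noteq> \<infinity>" using assms(1) by (metis infinity_ennreal_def top.extremum_uniqueI)
  moreover have "enn2real x \<le> enn2real y" using assms(1) False by (simp add: enn2real_mono top.not_eq_extremum)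
  ultimately show ?thesis using False assms(2)
    by (simp add: enn_powr_def powr_mono2 ennreal_leI)
qed

lemma enn_powr_ennreal: "w \<ge> 0 \<Longrightarrow> enn_powr (ennreal w) r = ennreal (w powr r)"
  by (simp add: enn_powr_def)

lemma enn_powr_inv:
  assumes "ennreal s \<le> enn_powr y p" "p > 0" "p * q = 1" "s \<ge> 0"
  shows "ennreal (s powr q) \<le> y"
proof (cases "y = \<infinity>")
  case True then show ?thesis by simp
next
  case False
  then obtain y' where y: "y = ennreal y'" "y' \<ge> 0" by (cases y) auto
  with assms have "s \<le> y' powr p" by (simp add: enn_powr_def)
  moreover have "q > 0" using assms(2,3) by (metis zero_less_one zero_less_mult_pos)
  ultimately have "s powr q \<le> (y' powr p) powr q"
    using assms by (intro powr_mono2) auto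
  also have "\<dots> = y'" using y assms by (simp add: powr_powr)
  finally show ?thesis using y by (simp add: ennreal_leI)
qed

lemma star_ext_ge:
  "0 \<le> u \<Longrightarrow> 0 \<le> v \<Longrightarrow> ennreal u \<le> a \<Longrightarrow> ennreal v \<le> b \<Longrightarrow> ennreal (s u v) \<le> star_ext s a b"
  unfolding star_ext_def by (rule SUP_upper2[where i="(u,v)"]) auto

lemma star_ext_eq:
  assumes mono: "\<And>a a' b b'. 0 \<le> a \<Longrightarrow> a \<le> a' \<Longrightarrow> 0 \<le> b \<Longrightarrow> b \<le> b' \<Longrightarrow> s a b \<le> s a' b'"
  shows "star_ext s a b = (SUP n::nat. ennreal (s (enn2real (min a (of_nat n))) (enn2real (min b (of_nat n)))))"
proof (rule antisym)
  show "star_ext s a b \<le> (SUP n::nat. ennreal (s (enn2real (min a (of_nat n))) (enn2real (min b (of_nat n)))))"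
    unfolding star_ext_def
  proof (rule SUP_least, clarsimp)
    fix x y assume xy: "0 \<le> x" "0 \<le> y" "ennreal x \<le> a" "ennreal y \<le> b"
    obtain n :: nat where n: "max x y \<le> n" using real_arch_simple by blast
    have fa: "min a (of_nat n) < top" by (simp add: min.strict_coboundedI2 of_nat_less_top)
    have fb: "min b (of_nat n) < top" by (simp add: min.strict_coboundedI2 of_nat_less_top)
    have "ennreal x \<le> min a (of_nat n)" using xy n by (simp add: ennreal_of_nat_eq_real_of_nat ennreal_leI)
    then have 1: "x \<le> enn2real (min a (of_nat n))" using enn2real_mono[OF _ fa] xy by fastforce
    have "ennreal y \<le> min b (of_nat n)" using xy n by (simp add: ennreal_of_nat_eq_real_of_nat ennreal_leI)
    then have 2: "y \<le> enn2real (min b (of_nat n))" using enn2real_mono[OF _ fb] xy by fastforce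
    have "ennreal (s x y) \<le> ennreal (s (enn2real (min a (of_nat n))) (enn2real (min b (of_nat n))))"
      using mono[OF xy(1) 1 xy(2) 2] by (rule ennreal_leI)
    then show "ennreal (s x y) \<le> (SUP n::nat. ennreal (s (enn2real (min a (of_nat n))) (enn2real (min b (of_nat n)))))"
      by (rule SUP_upper2[OF UNIV_I])
  qed
next
  show "(SUP n::nat. ennreal (s (enn2real (min a (of_nat n))) (enn2real (min b (of_nat n))))) \<le> star_ext s a b"
  proof (rule SUP_least)
    fix n :: nat
    have fa: "min a (of_nat n) < top" by (simp add: min.strict_coboundedI2 of_nat_less_top)
    have fb: "min b (of_nat n) < top" by (simp add: min.strict_coboundedI2 of_nat_less_top)
    show "ennreal (s (enn2real (min a (of_nat n))) (enn2real (min b (of_nat n)))) \<le> star_ext s a b"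
      apply (rule star_ext_ge)
      using fa fb by (auto simp: ennreal_enn2real_if)
  qed
qed

lemma star_meas:
  fixes s :: "real \<Rightarrow> real \<Rightarrow> real"
  assumes cont: "continuous_on ({0..} \<times> {0..}) (\<lambda>(a, b). s a b)"
  and [measurable]: "g1 \<in> borel_measurable M" "g2 \<in> borel_measurable M"
  shows "(\<lambda>x. s (max (g1 x) 0) (max (g2 x) 0)) \<in> borel_measurable M"
proof -
  have "continuous_on UNIV (\<lambda>p. (\<lambda>(a, b). s a b) ((\<lambda>p. (max (fst p) 0, max (snd p) (0::real))) p))"
    by (rule continuous_on_compose2[OF cont]) (auto intro!: continuous_intros)
  then have "continuous_on UNIV (\<lambda>p. (\<lambda>a b. s (max a 0) (max b 0)) (fst p) (snd p))"
    by (simp add: case_prod_beta)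
  from borel_measurable_continuous_Pair[OF assms(2,3) this] show ?thesis .
qed

lemma powr_id_le:
  assumes "\<And>x::real. 0 \<le> x \<Longrightarrow> x powr a \<le> x" shows "a = 1"
proof -
  have "2 powr a \<le> 2 powr 1" using assms[of 2] by simp
  then have 1: "a \<le> 1" using powr_le_cancel_iff[of 2 a 1] by linarith
  have "(1/2) powr a \<le> 1/2" using assms[of "1/2"] by simp
  then have "1 / 2 powr a \<le> 1/2" by (simp add: powr_divide)
  then have "2 powr 1 \<le> 2 powr a" by (simp add: field_simps)
  then have "1 \<le> a" using powr_le_cancel_iff[of 2 1 a] by linarith
  with 1 show ?thesis by simp
qed

lemma powr_id_ge:
  assumes "\<And>x::real. 0 \<le> x \<Longrightarrow> x \<le> x powr a" shows "a = 1"
proof -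
  have "2 powr 1 \<le> 2 powr a" using assms[of 2] by simp
  then have 1: "1 \<le> a" using powr_le_cancel_iff[of 2 1 a] by linarith
  have "1/2 \<le> (1/2) powr a" using assms[of "1/2"] by simp
  then have "1/2 \<le> 1 / 2 powr a" by (simp add: powr_divide)
  then have "2 powr a \<le> 2 powr 1" by (simp add: field_simps)
  then have "a \<le> 1" using powr_le_cancel_iff[of 2 a 1] by linarith
  with 1 show ?thesis by simp
qed

theorem corollary3p8:
  fixes M :: "'a measure" and m :: "'a set \<Rightarrow> ennreal"
    and f1 f2 :: "'a \<Rightarrow> ennreal" and star :: "real \<Rightarrow> real \<Rightarrow> real"
    and \<omega>0 \<omega>1 \<omega>2 \<xi>0 \<xi>1 \<xi>2 :: real
  assumes f1_meas: "f1 \<in> borel_measurable M" and f2_meas: "f2 \<in> borel_measurable M"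
    and como: "comonotone M f1 f2"
    and star_cont: "continuous_on ({0..} \<times> {0..}) (\<lambda>(a, b). star a b)"
    and star_mono: "\<And>a a' b b'. 0 \<le> a \<Longrightarrow> a \<le> a' \<Longrightarrow> 0 \<le> b \<Longrightarrow> b \<le> b'
                       \<Longrightarrow> star a b \<le> star a' b'"
    and star_nonneg: "\<And>a b. 0 \<le> a \<Longrightarrow> 0 \<le> b \<Longrightarrow> 0 \<le> star a b"
    and star_min: "\<And>a b. 0 \<le> a \<Longrightarrow> 0 \<le> b \<Longrightarrow> star a b \<le> min a b"
    and pos: "\<omega>0 > 0" "\<omega>1 > 0" "\<omega>2 > 0" "\<xi>0 > 0" "\<xi>1 > 0" "\<xi>2 > 0"
    and exp0: "\<And>x::real. 0 \<le> x \<Longrightarrow> x powr (1 / (\<xi>0 * \<omega>0)) \<le> x"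
    and exp1: "\<And>x::real. 0 \<le> x \<Longrightarrow> x \<le> x powr (1 / (\<xi>1 * \<omega>1))"
    and exp2: "\<And>x::real. 0 \<le> x \<Longrightarrow> x \<le> x powr (1 / (\<xi>2 * \<omega>2))"
    and exp1': "\<And>x::real. 0 \<le> x \<Longrightarrow> x powr (\<omega>1 / \<omega>0) \<le> x"
    and exp2': "\<And>x::real. 0 \<le> x \<Longrightarrow> x powr (\<omega>2 / \<omega>0) \<le> x"
    and mm: "monotone_measure M m"
    and fin1: "sugeno M m (\<lambda>x. enn_powr (f1 x) \<xi>1) < \<infinity>"
    and fin2: "sugeno M m (\<lambda>x. enn_powr (f2 x) \<xi>2) < \<infinity>"
  shows "enn_powr (sugeno M m (\<lambda>x. enn_powr (star_ext star (f1 x) (f2 x)) \<xi>0)) \<omega>0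
           \<ge> ennreal (star (enn2real (sugeno M m (\<lambda>x. enn_powr (f1 x) \<xi>1)) powr \<omega>1)
                           (enn2real (sugeno M m (\<lambda>x. enn_powr (f2 x) \<xi>2)) powr \<omega>2))"
proof -
  have e0: "\<xi>0 * \<omega>0 = 1" using powr_id_le[of "1 / (\<xi>0 * \<omega>0)"] exp0 pos by (simp add: field_simps)
  have e1: "\<xi>1 * \<omega>1 = 1" using powr_id_ge[of "1 / (\<xi>1 * \<omega>1)"] exp1 pos by (simp add: field_simps)
  have e2: "\<xi>2 * \<omega>2 = 1" using powr_id_ge[of "1 / (\<xi>2 * \<omega>2)"] exp2 pos by (simp add: field_simps)
  have e1': "\<omega>1 = \<omega>0" using powr_id_le[of "\<omega>1 / \<omega>0"] exp1' pos by (simp add: field_simps)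
  have e2': "\<omega>2 = \<omega>0" using powr_id_le[of "\<omega>2 / \<omega>0"] exp2' pos by (simp add: field_simps)
  have [measurable]: "f1 \<in> borel_measurable M" "f2 \<in> borel_measurable M" using f1_meas f2_meas .
  define g1 where "g1 x = enn_powr (f1 x) \<xi>1" for x
  define g2 where "g2 x = enn_powr (f2 x) \<xi>2" for x
  define h where "h x = enn_powr (star_ext star (f1 x) (f2 x)) \<xi>0" for x
  have g1m[measurable]: "g1 \<in> borel_measurable M" unfolding g1_def by measurable
  have g2m[measurable]: "g2 \<in> borel_measurable M" unfolding g2_def by measurable
  have hm[measurable]: "h \<in> borel_measurable M"
  proof -
    have "(\<lambda>x. star_ext star (f1 x) (f2 x)) =
      (\<lambda>x. SUP n::nat. ennreal (star (max (enn2real (min (f1 x) (of_nat n))) 0) (max (enn2real (min (f2 x) (of_nat n))) 0)))"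
      using star_ext_eq[OF star_mono] by (simp add: max_absorb1)
    moreover have "(\<lambda>x. SUP n::nat. ennreal (star (max (enn2real (min (f1 x) (of_nat n))) 0) (max (enn2real (min (f2 x) (of_nat n))) 0)))
       \<in> borel_measurable M"
    proof (intro borel_measurable_SUP measurable_compose[OF _ measurable_ennreal])
      fix n :: nat
      show "(\<lambda>x. star (max (enn2real (min (f1 x) (of_nat n))) 0) (max (enn2real (min (f2 x) (of_nat n))) 0)) \<in> borel_measurable M"
        by (rule star_meas[OF star_cont]) measurable
    qed auto
    ultimately have "(\<lambda>x. star_ext star (f1 x) (f2 x)) \<in> borel_measurable M" by simp
    then show ?thesis unfolding h_def by (rule enn_powr_meas)
  qed
  define A where "A = sugeno M m g1"
  define B where "B = sugeno M m g2"
  define C where "C = sugeno M m h"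
  define a where "a = enn2real A"
  define b where "b = enn2real B"
  have Aa: "A = ennreal a" using fin1 unfolding A_def a_def g1_def by simp
  have Bb: "B = ennreal b" using fin2 unfolding B_def b_def g2_def by simp
  have a0: "a \<ge> 0" "b \<ge> 0" unfolding a_def b_def by auto
  have mmono: "\<And>X Y. X \<in> sets M \<Longrightarrow> Y \<in> sets M \<Longrightarrow> X \<subseteq> Y \<Longrightarrow> m X \<le> m Y"
    using mm unfolding monotone_measure_def by blast
  show ?thesis
  proof (cases "C = \<infinity>")
    case True
    then show ?thesis unfolding C_def h_def by (simp add: enn_powr_def)
  next
    case False
    then obtain L where CL: "C = ennreal L" "L \<ge> 0" by (cases C) auto
    have K: "star (s powr \<omega>1) (t powr \<omega>2) \<le> L powr \<omega>0"
      if st: "0 < s" "s < a" "0 < t" "t < b" for s t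
    proof -
      have "ennreal s < A" using st Aa by (simp add: ennreal_lessI)
      then obtain r1 where r1: "r1 > 0" "ennreal s < min r1 (m {x\<in>space M. r1 \<le> g1 x})"
        unfolding A_def sugeno_def less_SUP_iff by auto
      have "ennreal t < B" using st Bb by (simp add: ennreal_lessI)
      then obtain r2 where r2: "r2 > 0" "ennreal t < min r2 (m {x\<in>space M. r2 \<le> g2 x})"
        unfolding B_def sugeno_def less_SUP_iff by auto
      have sr1: "ennreal s < r1" "ennreal s < m {x\<in>space M. r1 \<le> g1 x}" using r1(2) by auto
      have tr2: "ennreal t < r2" "ennreal t < m {x\<in>space M. r2 \<le> g2 x}" using r2(2) by auto
      define S1 where "S1 = {x\<in>space M. r1 \<le> g1 x}"
      define S2 where "S2 = {x\<in>space M. r2 \<le> g2 x}"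
      have S1m: "S1 \<in> sets M" unfolding S1_def by measurable
      have S2m: "S2 \<in> sets M" unfolding S2_def by measurable
      have nest: "S1 \<subseteq> S2 \<or> S2 \<subseteq> S1"
      proof (rule ccontr)
        assume "\<not> ?thesis"
        then obtain x y where x: "x \<in> S1" "x \<notin> S2" and y: "y \<in> S2" "y \<notin> S1" by blast
        have sp: "x \<in> space M" "y \<in> space M" using x y unfolding S1_def S2_def by auto
        have "g1 y < g1 x" using x y sp unfolding S1_def by auto
        then have 1: "f1 y < f1 x" unfolding g1_def using enn_powr_mono[of "f1 x" "f1 y" \<xi>1] pos
          by (meson not_le)
        have "g2 x < g2 y" using x y sp unfolding S2_def by auto
        then have 2: "f2 x < f2 y" unfolding g2_def using enn_powr_mono[of "f2 y" "f2 x" \<xi>2] pos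
          by (meson not_le)
        from como sp 1 2 show False unfolding comonotone_def by blast
      qed
      have mS: "ennreal (min s t) \<le> m (S1 \<inter> S2)"
      proof (cases "S1 \<subseteq> S2")
        case True
        then have "S1 \<inter> S2 = S1" by blast
        have "ennreal (min s t) \<le> ennreal s" by (rule ennreal_leI) simp
        also have "\<dots> \<le> m S1" using sr1(2) unfolding S1_def by simp
        finally show ?thesis using \<open>S1 \<inter> S2 = S1\<close> by simp
      next
        case False
        then have "S1 \<inter> S2 = S2" using nest by blast
        have "ennreal (min s t) \<le> ennreal t" by (rule ennreal_leI) simp
        also have "\<dots> \<le> m S2" using tr2(2) unfolding S2_def by simp
        finally show ?thesis using \<open>S1 \<inter> S2 = S2\<close> by simp
      qed
      define u where "u = s powr \<omega>1"
      define v where "v = t powr \<omega>2"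
      define w where "w = star u v"
      define c where "c = w powr \<xi>0"
      have uv: "u \<ge> 0" "v \<ge> 0" unfolding u_def v_def by auto
      have w0: "w \<ge> 0" unfolding w_def using star_nonneg uv by auto
      have c0: "c \<ge> 0" unfolding c_def by auto
      have sub: "S1 \<inter> S2 \<subseteq> {x\<in>space M. ennreal c \<le> h x}"
      proof safe
        fix x assume x: "x \<in> S1" "x \<in> S2"
        then show "x \<in> space M" unfolding S1_def by auto
        have "r1 \<le> g1 x" using x unfolding S1_def by simp
        then have "ennreal s \<le> g1 x" using sr1(1) by simp
        then have 1: "ennreal u \<le> f1 x" unfolding u_def g1_def
          using enn_powr_inv[of s "f1 x" \<xi>1 \<omega>1] e1 pos st by auto
        have "r2 \<le> g2 x" using x unfolding S2_def by simp
        then have "ennreal t \<le> g2 x" using tr2(1) by simp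
        then have 2: "ennreal v \<le> f2 x" unfolding v_def g2_def
          using enn_powr_inv[of t "f2 x" \<xi>2 \<omega>2] e2 pos st by auto
        have "ennreal w \<le> star_ext star (f1 x) (f2 x)" unfolding w_def
          using star_ext_ge[OF uv 1 2] .
        then have "enn_powr (ennreal w) \<xi>0 \<le> h x" unfolding h_def using enn_powr_mono pos by blast
        then show "ennreal c \<le> h x" unfolding c_def using enn_powr_ennreal[OF w0] by simp
      qed
      have Tm: "{x\<in>space M. ennreal c \<le> h x} \<in> sets M" by measurable
      have cs: "c \<le> min s t"
      proof -
        have "w \<le> min u v" unfolding w_def using star_min uv by auto
        then have "c \<le> (min u v) powr \<xi>0" unfolding c_def using w0 pos by (intro powr_mono2) auto
        also have "\<dots> = min (u powr \<xi>0) (v powr \<xi>0)"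
        proof (cases "u \<le> v")
          case True
          then have "u powr \<xi>0 \<le> v powr \<xi>0" using uv pos by (intro powr_mono2) auto
          with True show ?thesis by (simp add: min_def)
        next
          case False
          then have "v powr \<xi>0 \<le> u powr \<xi>0" using uv pos by (intro powr_mono2) auto
          with False show ?thesis by (auto simp: min_def)
        qed
        also have "u powr \<xi>0 = s" unfolding u_def using st e0 e1' pos
          by (simp add: powr_powr mult.commute)
        also have "v powr \<xi>0 = t" unfolding v_def using st e0 e2' pos
          by (simp add: powr_powr mult.commute)
        finally show ?thesis .
      qed
      have "ennreal c \<le> C"
      proof (cases "c = 0")
        case True then show ?thesis by simp
      next
        case False
        then have cp: "ennreal c \<in> {0<..}" using c0 by auto
        have "ennreal c \<le> m (S1 \<inter> S2)" using mS cs by (meson ennreal_leI order_trans)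
        also have "\<dots> \<le> m {x\<in>space M. ennreal c \<le> h x}" using mmono[OF _ Tm sub] S1m S2m by blast
        finally have eq: "min (ennreal c) (m {x\<in>space M. ennreal c \<le> h x}) = ennreal c" by simp
        have "min (ennreal c) (m {x\<in>space M. ennreal c \<le> h x}) \<le> C" unfolding C_def sugeno_def
          by (rule SUP_upper[OF cp, where f="\<lambda>t. min t (m {x\<in>space M. t \<le> h x})"])
        then show ?thesis using eq by simp
      qed
      then have "c \<le> L" using CL by (simp add: ennreal_le_iff)
      then have "c powr \<omega>0 \<le> L powr \<omega>0" using c0 pos by (intro powr_mono2) auto
      moreover have "c powr \<omega>0 = w" unfolding c_def using w0 e0 by (simp add: powr_powr)
      ultimately show ?thesis unfolding w_def u_def v_def by simp
    qed
    have main: "star (a powr \<omega>1) (b powr \<omega>2) \<le> L powr \<omega>0"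
    proof (cases "a = 0 \<or> b = 0")
      case True
      have "star (a powr \<omega>1) (b powr \<omega>2) \<le> min (a powr \<omega>1) (b powr \<omega>2)" by (rule star_min) auto
      also have "\<dots> \<le> 0" using True by auto
      also have "0 \<le> L powr \<omega>0" by simp
      finally show ?thesis .
    next
      case False
      then have ap: "a > 0" "b > 0" using a0 by auto
      define sn where "sn n = a - (a/2) * inverse (real (Suc n))" for n
      define tn where "tn n = b - (b/2) * inverse (real (Suc n))" for n
      have inv: "0 < inverse (real (Suc n))" "inverse (real (Suc n)) \<le> 1" for n by (auto simp: inverse_le_1_iff)
      have sn: "0 < sn n" "sn n < a" for n
        unfolding sn_def using ap inv[of n] by (auto simp: mult_le_cancel_left1)
      have tn: "0 < tn n" "tn n < b" for n
        unfolding tn_def using ap inv[of n] by (auto simp: mult_le_cancel_left1)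
      have "sn \<longlonglongrightarrow> a - (a/2) * 0" unfolding sn_def
        by (intro tendsto_intros LIMSEQ_inverse_real_of_nat)
      then have sl: "sn \<longlonglongrightarrow> a" by simp
      have "tn \<longlonglongrightarrow> b - (b/2) * 0" unfolding tn_def
        by (intro tendsto_intros LIMSEQ_inverse_real_of_nat)
      then have tl: "tn \<longlonglongrightarrow> b" by simp
      have pl: "(\<lambda>n. (sn n powr \<omega>1, tn n powr \<omega>2)) \<longlonglongrightarrow> (a powr \<omega>1, b powr \<omega>2)"
        using ap by (intro tendsto_intros sl tl) auto
      have "(\<lambda>n. (\<lambda>(a, b). star a b) (sn n powr \<omega>1, tn n powr \<omega>2)) \<longlonglongrightarrow> (\<lambda>(a, b). star a b) (a powr \<omega>1, b powr \<omega>2)"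
        by (rule continuous_on_tendsto_compose[OF star_cont pl]) auto
      then have lim: "(\<lambda>n. star (sn n powr \<omega>1) (tn n powr \<omega>2)) \<longlonglongrightarrow> star (a powr \<omega>1) (b powr \<omega>2)"
        by simp
      show ?thesis
        by (rule LIMSEQ_le_const2[OF lim]) (use K sn tn in blast)
    qed
    have "ennreal (star (a powr \<omega>1) (b powr \<omega>2)) \<le> ennreal (L powr \<omega>0)"
      using main by (rule ennreal_leI)
    also have "\<dots> = enn_powr C \<omega>0" using CL by (simp add: enn_powr_def)
    finally show ?thesis unfolding C_def h_def a_def b_def A_def B_def g1_def g2_def by simp
  qed
qed

end
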